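(* In the even setting below, define recursively, for all $k\in\mathbb Z$ and $\ell\ge 0$, block columns $G^{(k)}_{2\ell}$, $\hat G^{(k)}_{2\ell+1}$ (of size $mn\times n$) and $n\times n$ matrices $\alpha_i^j(k)$ by $G^{(k)}_0=r_k$, $\hat G^{(k)}_{2\ell+1}=p_k\,(G^{(k+1)}_{2\ell})_{\mathrm{last}}+\Gamma G^{(k+1)}_{2\ell}$, $G^{(k)}_{2\ell+2}=\Gamma\hat G^{(k+1)}_{2\ell+1}$, $\alpha_0^{2\ell+1}(k)=(G^{(k+1)}_{2\ell})_{\mathrm{last}}$, $\alpha_{2r}^{2\ell+1}(k)=\alpha_{2r-1}^{2\ell}(k+1)$ for $1\le r\le \ell$, $\alpha_{2r+1}^{2\ell+2}(k)=\alpha_{2r}^{2\ell+1}(k+1)$ for $0\le r\le\ell$. Then for all $k$ and all $\ell\ge 0$, $$F^{(k)}_{2\ell}=\sum_{r=1}^{\ell}F^{(k)}_{2r-1}\alpha_{2r-1}^{2\ell}(k)+G^{(k)}_{2\ell},\qquad F^{(k)}_{2\ell+1}=\sum_{r=0}^{\ell}F^{(k)}_{2r}\alpha_{2r}^{2\ell+1}(k)+\hat G^{(k)}_{2\ell+1}.$$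
   Context: Even setting: integers $n\ge1$, $s\ge 2$, $m=2s$. For each $k\in\mathbb Z$ let $a_k^0,\dots,a_k^{m-1}$ be $n\times n$ matrices, $N$-periodic in $k$. $Q_k$ is the $mn\times mn$ block matrix with $I_n$ in the blocks $(i+1,i)$, $i=1,\dots,m-1$, last block column $(a_k^0;a_k^1;\dots;a_k^{m-1})$, and $O_n$ elsewhere. $r_k$ is the block column $(O_n;a_k^1;O_n;a_k^3;\dots;O_n;a_k^{2s-1})$ and $p_k=(a_k^0;O_n;a_k^2;O_n;\dots;a_k^{2s-2};O_n)$ (so the last block column of $Q_k$ is $p_k+r_k$). $\Gamma$ is the $mn\times mn$ block matrix with $I_n$ in blocks $(i+1,i)$ and $O_n$ elsewhere. $F^{(k)}_0=r_k$ and $F^{(k)}_\ell=Q_kQ_{k+1}\cdots Q_{k+\ell-1}r_{k+\ell}$ for $\ell\ge1$. For a block column $A$, $(A)_{\mathrm{last}}$ denotes its last $n\times n$ block. *)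

theory Defs
  imports "Jordan_Normal_Form.Matrix"
begin

text \<open>Block conventions: an mn x mn (resp. mn x n) block matrix has its (0-indexed)
 block (bi,bj) in rows bi*n..bi*n+n-1 and columns bj*n..bj*n+n-1.
 Blocks are 0-indexed here: the paper's block (i+1,i), i=1..m-1, is block (i,i-1) here.\<close>

definition msum :: "nat \<Rightarrow> nat \<Rightarrow> ('b \<Rightarrow> 'a::comm_ring_1 mat) \<Rightarrow> 'b set \<Rightarrow> 'a mat" where
  "msum nr nc f I = mat nr nc (\<lambda>(i,j). \<Sum>x\<in>I. f x $$ (i,j))"

definition blockcol :: "nat \<Rightarrow> nat \<Rightarrow> (nat \<Rightarrow> 'a::comm_ring_1 mat) \<Rightarrow> 'a mat" where
  "blockcol n m f = mat (m*n) n (\<lambda>(i,j). f (i div n) $$ (i mod n, j))"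

definition lastblk :: "nat \<Rightarrow> nat \<Rightarrow> 'a::comm_ring_1 mat \<Rightarrow> 'a mat" where
  "lastblk n m A = mat n n (\<lambda>(i,j). A $$ ((m-1)*n + i, j))"

definition Gam :: "nat \<Rightarrow> nat \<Rightarrow> 'a::comm_ring_1 mat" where
  "Gam n m = mat (m*n) (m*n) (\<lambda>(i,j).
     if i div n = j div n + 1 \<and> i mod n = j mod n then 1 else 0)"

definition Qmat :: "nat \<Rightarrow> nat \<Rightarrow> (int \<Rightarrow> nat \<Rightarrow> 'a::comm_ring_1 mat) \<Rightarrow> int \<Rightarrow> 'a mat" where
  "Qmat n m a k = mat (m*n) (m*n) (\<lambda>(i,j).
     if j div n = m - 1 then a k (i div n) $$ (i mod n, j mod n)
     else if i div n = j div n + 1 \<and> i mod n = j mod n then 1 else 0)"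

definition rcol :: "nat \<Rightarrow> nat \<Rightarrow> (int \<Rightarrow> nat \<Rightarrow> 'a::comm_ring_1 mat) \<Rightarrow> int \<Rightarrow> 'a mat" where
  "rcol n m a k = blockcol n m (\<lambda>i. if odd i then a k i else 0\<^sub>m n n)"

definition pcol :: "nat \<Rightarrow> nat \<Rightarrow> (int \<Rightarrow> nat \<Rightarrow> 'a::comm_ring_1 mat) \<Rightarrow> int \<Rightarrow> 'a mat" where
  "pcol n m a k = blockcol n m (\<lambda>i. if even i then a k i else 0\<^sub>m n n)"

fun Qprod :: "nat \<Rightarrow> nat \<Rightarrow> (int \<Rightarrow> nat \<Rightarrow> 'a::comm_ring_1 mat) \<Rightarrow> int \<Rightarrow> nat \<Rightarrow> 'a mat" where
  "Qprod n m a k 0 = 1\<^sub>m (m*n)"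
| "Qprod n m a k (Suc l) = Qprod n m a k l * Qmat n m a (k + int l)"

definition Fcol :: "nat \<Rightarrow> nat \<Rightarrow> (int \<Rightarrow> nat \<Rightarrow> 'a::comm_ring_1 mat) \<Rightarrow> int \<Rightarrow> nat \<Rightarrow> 'a mat" where
  "Fcol n m a k l = Qprod n m a k l * rcol n m a (k + int l)"

(* Gev n m a k l = G^{(k)}_{2l} *)
fun Gev :: "nat \<Rightarrow> nat \<Rightarrow> (int \<Rightarrow> nat \<Rightarrow> 'a::comm_ring_1 mat) \<Rightarrow> int \<Rightarrow> nat \<Rightarrow> 'a mat" where
  "Gev n m a k 0 = rcol n m a k"
| "Gev n m a k (Suc l) = Gam n m *
     (pcol n m a (k+1) * lastblk n m (Gev n m a (k+2) l) + Gam n m * Gev n m a (k+2) l)"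

(* Ghat n m a k l = \<hat>G^{(k)}_{2l+1} = p_k (G^{(k+1)}_{2l})_last + Gamma G^{(k+1)}_{2l} *)
definition Ghat :: "nat \<Rightarrow> nat \<Rightarrow> (int \<Rightarrow> nat \<Rightarrow> 'a::comm_ring_1 mat) \<Rightarrow> int \<Rightarrow> nat \<Rightarrow> 'a mat" where
  "Ghat n m a k l = pcol n m a k * lastblk n m (Gev n m a (k+1) l) + Gam n m * Gev n m a (k+1) l"

lemma Gev_Suc_Ghat: "Gev n m a k (Suc l) = Gam n m * Ghat n m a (k+1) l"
  by (simp add: Ghat_def add.assoc)

(* alpha n m a j i k = \<alpha>_i^j(k); only meaningful for the index pairs used in the paper
   (i < j, i and j of opposite parity); other values are set to O_n *)
fun alpha :: "nat \<Rightarrow> nat \<Rightarrow> (int \<Rightarrow> nat \<Rightarrow> 'a::comm_ring_1 mat) \<Rightarrow> nat \<Rightarrow> nat \<Rightarrow> int \<Rightarrow> 'a mat" where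
  "alpha n m a 0 i k = 0\<^sub>m n n"
| "alpha n m a (Suc j) i k =
     (if i = 0 then (if even j then lastblk n m (Gev n m a (k+1) (j div 2)) else 0\<^sub>m n n)
      else alpha n m a j (i - 1) (k+1))"

end

theory Submission
  imports Defs
begin

lemma mult_entry:
  assumes "A \<in> carrier_mat nr nk" "B \<in> carrier_mat nk nc" "i < nr" "j < nc"
  shows "(A*B) $$ (i,j) = (\<Sum>t<nk. A$$(i,t) * B$$(t,j))"
  using assms by (auto simp: scalar_prod_def atLeast0LessThan intro!: sum.cong)

lemma add_entry:
  assumes "A \<in> carrier_mat nr nc" "B \<in> carrier_mat nr nc" "i < nr" "j < nc"
  shows "(A+B) $$ (i,j) = A$$(i,j) + B$$(i,j)"
  using assms by auto

lemma msum_carrier[simp]: "msum nr nc f I \<in> carrier_mat nr nc"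
  by (simp add: msum_def)
lemma msum_dims[simp]: "dim_row (msum nr nc f I) = nr" "dim_col (msum nr nc f I) = nc"
  by (simp_all add: msum_def)
lemma msum_index: "i < nr \<Longrightarrow> j < nc \<Longrightarrow> msum nr nc f I $$ (i,j) = (\<Sum>x\<in>I. f x $$ (i,j))"
  by (simp add: msum_def)

lemma msum_mult_left:
  assumes "A \<in> carrier_mat nr' nr" "\<And>x. x \<in> I \<Longrightarrow> f x \<in> carrier_mat nr nc"
  shows "msum nr' nc (\<lambda>x. A * f x) I = A * msum nr nc f I"
proof (rule eq_matI)
  fix i j assume ij: "i < dim_row (A * msum nr nc f I)" "j < dim_col (A * msum nr nc f I)"
  then have ij': "i < nr'" "j < nc" using assms by auto
  have "msum nr' nc (\<lambda>x. A * f x) I $$ (i,j) = (\<Sum>x\<in>I. \<Sum>t<nr. A$$(i,t) * f x $$(t,j))"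
    using ij' assms by (auto simp: msum_index intro!: sum.cong mult_entry)
  also have "\<dots> = (\<Sum>t<nr. A$$(i,t) * (\<Sum>x\<in>I. f x $$(t,j)))"
    by (simp add: sum_distrib_left sum.swap[of _ I])
  also have "\<dots> = (A * msum nr nc f I) $$ (i,j)"
    using ij' assms by (subst mult_entry[OF _ msum_carrier]) (auto simp: msum_index)
  finally show "msum nr' nc (\<lambda>x. A * f x) I $$ (i,j) = (A * msum nr nc f I) $$ (i,j)" .
qed (use assms in auto)

lemma msum_add:
  assumes "\<And>x. x \<in> I \<Longrightarrow> f x \<in> carrier_mat nr nc" "\<And>x. x \<in> I \<Longrightarrow> g x \<in> carrier_mat nr nc"
  shows "msum nr nc (\<lambda>x. f x + g x) I = msum nr nc f I + msum nr nc g I"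
proof (rule eq_matI)
  fix i j assume "i < dim_row (msum nr nc f I + msum nr nc g I)" "j < dim_col (msum nr nc f I + msum nr nc g I)"
  then have ij: "i < nr" "j < nc" by auto
  have "(\<Sum>x\<in>I. (f x + g x) $$ (i, j)) = (\<Sum>x\<in>I. f x $$ (i, j) + g x $$ (i,j))"
    using assms ij by (intro sum.cong refl add_entry) auto
  then show "msum nr nc (\<lambda>x. f x + g x) I $$ (i, j) = (msum nr nc f I + msum nr nc g I) $$ (i, j)"
    using ij by (simp add: msum_index sum.distrib)
qed auto

lemma msum_Suc:
  assumes "f 0 \<in> carrier_mat nr nc"
  shows "msum nr nc f {..<Suc j} = f 0 + msum nr nc (\<lambda>i. f (Suc i)) {..<j}"
  using assms by (intro eq_matI) (auto simp del: sum.lessThan_Suc simp: msum_index sum.lessThan_Suc_shift)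

lemma msum_cong: "(\<And>x. x \<in> I \<Longrightarrow> f x = g x) \<Longrightarrow> msum nr nc f I = msum nr nc g I"
  by (simp add: msum_def cong: sum.cong)

lemma lastblk_carrier[simp]: "lastblk n m A \<in> carrier_mat n n"
  by (simp add: lastblk_def)

lemma lastblk_msum:
  assumes "m \<ge> 1"
  shows "lastblk n m (msum (m*n) n f I) = msum n n (\<lambda>x. lastblk n m (f x)) I"
proof -
  have "(m-1)*n + i < m*n" if "i < n" for i
    using assms that by (metis add.commute add_less_cancel_left le_add_diff_inverse mult_Suc plus_1_eq_Suc)
  then show ?thesis
    by (intro eq_matI) (auto simp: msum_index lastblk_def)
qed

lemma lastblk_add:
  assumes "m \<ge> 1" "A \<in> carrier_mat (m*n) n" "B \<in> carrier_mat (m*n) n"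
  shows "lastblk n m (A + B) = lastblk n m A + lastblk n m B"
proof -
  have "(m-1)*n + i < m*n" if "i < n" for i
    using assms that by (metis add.commute add_less_cancel_left le_add_diff_inverse mult_Suc plus_1_eq_Suc)
  then show ?thesis using assms
    by (intro eq_matI) (auto simp: lastblk_def)
qed

lemma lastblk_mult:
  assumes "m \<ge> 1" "A \<in> carrier_mat (m*n) n" "B \<in> carrier_mat n n"
  shows "lastblk n m (A * B) = lastblk n m A * B"
proof -
  have "(m-1)*n + i < m*n" if "i < n" for i
    using assms that by (metis add.commute add_less_cancel_left le_add_diff_inverse mult_Suc plus_1_eq_Suc)
  note lt = this
  show ?thesis
  proof (rule eq_matI)
    fix i j assume "i < dim_row (lastblk n m A * B)" "j < dim_col (lastblk n m A * B)"
    then have ij: "i < n" "j < n" using assms by (auto simp: lastblk_def)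
    show "lastblk n m (A * B) $$ (i, j) = (lastblk n m A * B) $$ (i, j)"
      using ij lt[OF ij(1)] assms
      by (subst mult_entry[OF lastblk_carrier assms(3)], simp_all, simp del: index_mult_mat add: lastblk_def mult_entry[OF assms(2,3)])
  qed (use assms in \<open>auto simp: lastblk_def\<close>)
qed

lemma dims[simp]: "dim_row (Gam n m) = m*n" "dim_col (Gam n m) = m*n"
  "dim_row (Qmat n m a k) = m*n" "dim_col (Qmat n m a k) = m*n"
  "dim_row (pcol n m a k) = m*n" "dim_col (pcol n m a k) = n"
  "dim_row (rcol n m a k) = m*n" "dim_col (rcol n m a k) = n"
  "dim_row (lastblk n m X) = n" "dim_col (lastblk n m X) = n"
  by (simp_all add: Gam_def Qmat_def pcol_def rcol_def blockcol_def lastblk_def)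
lemma Gam_carrier[simp]: "Gam n m \<in> carrier_mat (m*n) (m*n)" by (simp add: Gam_def)
lemma Qmat_carrier[simp]: "Qmat n m a k \<in> carrier_mat (m*n) (m*n)" by (simp add: Qmat_def)
lemma pcol_carrier[simp]: "pcol n m a k \<in> carrier_mat (m*n) n" by (simp add: pcol_def blockcol_def)
lemma rcol_carrier[simp]: "rcol n m a k \<in> carrier_mat (m*n) n" by (simp add: rcol_def blockcol_def)
lemma Qprod_carrier[simp]: "Qprod n m a k l \<in> carrier_mat (m*n) (m*n)"
proof (induction l)
  case (Suc l) then show ?case using mult_carrier_mat[OF Suc Qmat_carrier] by simp
qed simp
lemma Fcol_carrier[simp]: "Fcol n m a k l \<in> carrier_mat (m*n) n"
  unfolding Fcol_def by (rule mult_carrier_mat[OF Qprod_carrier rcol_carrier])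
lemma Gev_carrier[simp]: "Gev n m a k l \<in> carrier_mat (m*n) n"
proof (induction l arbitrary: k)
  case (Suc l)
  have "dim_col (Gev n m a (k+2) l) = n" using Suc[of "k+2"] by auto
  then show ?case by (intro carrier_matI) simp_all
qed simp
lemma Ghat_carrier[simp]: "Ghat n m a k l \<in> carrier_mat (m*n) n"
proof -
  have "dim_col (Gev n m a (k+1) l) = n" by (rule carrier_matD(2)[OF Gev_carrier])
  then show ?thesis unfolding Ghat_def by (intro carrier_matI) simp_all
qed
lemma alpha_carrier[simp]: "alpha n m a j i k \<in> carrier_mat n n"
  by (induction j arbitrary: i k) auto
lemma alpha_zero: "\<not> (i < j \<and> odd (j - i)) \<Longrightarrow> alpha n m a j i k = 0\<^sub>m n n"
proof (induction j arbitrary: i k)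
  case (Suc j)
  then show ?case by (cases i) auto
qed simp

lemma div_sub_n:
  fixes n i :: nat
  assumes "0 < n" "n \<le> i"
  shows "(i - n) div n = i div n - 1" "(i - n) mod n = i mod n"
proof -
  obtain d where d: "i = d + n" using assms(2) le_Suc_ex by (metis add.commute)
  show "(i - n) div n = i div n - 1" using d assms(1) by simp
  show "(i - n) mod n = i mod n" using d by simp
qed

lemma Gam_entry:
  assumes "0 < n" "i < m*n" "t < m*n"
  shows "Gam n m $$ (i,t) = (if n \<le> i \<and> t = i - n then 1 else 0)"
proof -
  have "(i div n = t div n + 1 \<and> i mod n = t mod n) \<longleftrightarrow> (n \<le> i \<and> t = i - n)"
  proof
    assume h: "i div n = t div n + 1 \<and> i mod n = t mod n"
    have "i = (i div n) * n + i mod n" by simp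
    also have "\<dots> = t + n" using h div_mult_mod_eq[of t n] by (simp add: algebra_simps)
    finally show "n \<le> i \<and> t = i - n" by simp
  next
    assume h: "n \<le> i \<and> t = i - n"
    then show "i div n = t div n + 1 \<and> i mod n = t mod n"
      using div_sub_n[OF assms(1), of i] h assms
      by (metis Suc_eq_plus1 Suc_pred' div_greater_zero_iff)
  qed
  then show ?thesis using assms by (simp add: Gam_def)
qed

lemma Gam_mult_entry:
  assumes "0 < n" "X \<in> carrier_mat (m*n) nc" "i < m*n" "j < nc"
  shows "(Gam n m * X) $$ (i,j) = (if n \<le> i then X $$ (i-n, j) else 0)"
proof -
  have "(Gam n m * X) $$ (i,j) = (\<Sum>t<m*n. (if n \<le> i \<and> t = i - n then 1 else 0) * X $$ (t,j))"
    using assms by (simp del: index_mult_mat add: mult_entry[OF Gam_carrier assms(2)] Gam_entry)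
  also have "\<dots> = (\<Sum>t<m*n. if n \<le> i \<and> t = i - n then X $$ (t,j) else 0)"
    by (intro sum.cong) auto
  also have "\<dots> = (if n \<le> i then X $$ (i-n, j) else 0)"
    using assms(3) by (cases "n \<le> i") (auto simp: sum.delta')
  finally show ?thesis .
qed

lemma sum_lastblock:
  fixes m n :: nat
  assumes "0 < n" "1 \<le> m"
  shows "(\<Sum>t<m*n. if t div n = m-1 then g t else 0) = (\<Sum>u<n. g ((m-1)*n+u))"
proof -
  have "(\<Sum>t<m*n. if t div n = m-1 then g t else 0) = sum g {t \<in> {..<m*n}. t div n = m-1}"
    by (subst sum.inter_filter) auto
  also have "{t \<in> {..<m*n}. t div n = m-1} = (\<lambda>u. (m-1)*n+u) ` {..<n}"
  proof (intro equalityI subsetI)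
    fix t assume "t \<in> {t \<in> {..<m*n}. t div n = m-1}"
    then have "t div n = m - 1" by auto
    then have "t = (m-1)*n + t mod n" using div_mult_mod_eq[of t n] by simp
    then show "t \<in> (\<lambda>u. (m-1)*n+u) ` {..<n}" using assms by (metis imageI lessThan_iff mod_less_divisor)
  next
    fix t assume "t \<in> (\<lambda>u. (m-1)*n+u) ` {..<n}"
    then obtain u where u: "u < n" "t = (m-1)*n+u" by auto
    have "(m-1)*n + u < (m-1)*n + n" using u by simp
    also have "\<dots> = m*n" using assms by (metis add.commute le_add_diff_inverse mult_Suc plus_1_eq_Suc)
    finally show "t \<in> {t \<in> {..<m*n}. t div n = m-1}" using u assms by auto
  qed
  also have "sum g \<dots> = (\<Sum>u<n. g ((m-1)*n+u))"
    by (subst sum.reindex) (auto simp: inj_on_def)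
  finally show ?thesis .
qed

lemma Qmat_mult:
  assumes "0 < n" "1 \<le> m" "\<And>i. i < m \<Longrightarrow> a k i \<in> carrier_mat n n"
    and X: "X \<in> carrier_mat (m*n) n"
  shows "Qmat n m a k * X = Gam n m * X + (pcol n m a k + rcol n m a k) * lastblk n m X"
proof (rule eq_matI)
  fix i j assume "i < dim_row (Gam n m * X + (pcol n m a k + rcol n m a k) * lastblk n m X)"
     "j < dim_col (Gam n m * X + (pcol n m a k + rcol n m a k) * lastblk n m X)"
  then have ij: "i < m*n" "j < n" using X by auto
  have idiv: "i div n < m" using ij assms by (simp add: div_less_iff_less_mult)
  have Qe: "Qmat n m a k $$ (i,t) = Gam n m $$ (i,t) + (if t div n = m-1 then a k (i div n) $$ (i mod n, t mod n) else 0)"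
    if "t < m*n" for t
  proof -
    have "\<not> (i div n = t div n + 1)" if "t div n = m-1" using idiv that by simp
    then show ?thesis using that ij by (auto simp: Qmat_def Gam_def)
  qed
  have "(Qmat n m a k * X) $$ (i,j) = (\<Sum>t<m*n. (Gam n m $$ (i,t) + (if t div n = m-1 then a k (i div n) $$ (i mod n, t mod n) else 0)) * X $$ (t,j))"
    using ij by (simp del: index_mult_mat add: mult_entry[OF Qmat_carrier X] Qe)
  also have "\<dots> = (\<Sum>t<m*n. Gam n m $$ (i,t) * X $$ (t,j)) + (\<Sum>t<m*n. if t div n = m-1 then a k (i div n) $$ (i mod n, t mod n) * X $$ (t,j) else 0)"
    by (auto simp: sum.distrib[symmetric] distrib_right intro!: sum.cong)
  also have "(\<Sum>t<m*n. if t div n = m-1 then a k (i div n) $$ (i mod n, t mod n) * X $$ (t,j) else 0)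
     = (\<Sum>u<n. a k (i div n) $$ (i mod n, u) * X $$ ((m-1)*n+u,j))"
    using assms(1,2) by (subst sum_lastblock) auto
  also have "\<dots> = ((pcol n m a k + rcol n m a k) * lastblk n m X) $$ (i,j)"
  proof -
    have pr: "pcol n m a k $$ (i,u) + rcol n m a k $$ (i,u) = a k (i div n) $$ (i mod n, u)" if "u < n" for u
      using ij that assms(1) assms(3)[OF idiv] by (auto simp: pcol_def rcol_def blockcol_def)
    show ?thesis
      using ij by (subst mult_entry[of _ "m*n" n]) (auto simp: pr lastblk_def intro!: sum.cong)
  qed
  finally show "(Qmat n m a k * X) $$ (i,j) = (Gam n m * X + (pcol n m a k + rcol n m a k) * lastblk n m X) $$ (i,j)"
    using ij X by (subst index_add_mat(1)) (auto simp del: index_mult_mat(1) simp: mult_entry[OF Gam_carrier X])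
qed (use X in auto)


lemma Qprod_shift: "Qprod n m a k (Suc l) = Qmat n m a k * Qprod n m a (k+1) l"
proof (induction l)
  case 0
  show ?case by simp
next
  case (Suc l)
  have "Qprod n m a k (Suc (Suc l)) = (Qmat n m a k * Qprod n m a (k+1) l) * Qmat n m a (k + 1 + int l)"
    using Suc by (simp add: add.assoc)
  also have "\<dots> = Qmat n m a k * (Qprod n m a (k+1) l * Qmat n m a (k + 1 + int l))"
    by (rule assoc_mult_mat[OF Qmat_carrier Qprod_carrier Qmat_carrier])
  finally show ?case by simp
qed

lemma Fcol_Suc:
  assumes "0 < n" "1 \<le> m" "\<And>i. i < m \<Longrightarrow> a k i \<in> carrier_mat n n"
  shows "Fcol n m a k (Suc l) = Gam n m * Fcol n m a (k+1) l
           + (pcol n m a k + rcol n m a k) * lastblk n m (Fcol n m a (k+1) l)"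
proof -
  have "Fcol n m a k (Suc l) = (Qmat n m a k * Qprod n m a (k+1) l) * rcol n m a (k + 1 + int l)"
    unfolding Fcol_def Qprod_shift by (simp add: add.assoc)
  also have "\<dots> = Qmat n m a k * Fcol n m a (k+1) l"
    unfolding Fcol_def by (rule assoc_mult_mat[OF Qmat_carrier Qprod_carrier rcol_carrier])
  finally show ?thesis using Qmat_mult[of n m a k, OF assms Fcol_carrier] by simp
qed

lemma even_ge2: "even (q::nat) \<Longrightarrow> 1 \<le> q \<Longrightarrow> 2 \<le> q" by presburger

definition ez :: "nat \<Rightarrow> nat \<Rightarrow> 'a::comm_ring_1 mat \<Rightarrow> bool" where
  "ez n m Y = (\<forall>i j. i < m*n \<longrightarrow> j < n \<longrightarrow> even (i div n) \<longrightarrow> Y $$ (i,j) = 0)"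

lemma ez_rcol: "ez n m (rcol n m a k)"
  unfolding ez_def rcol_def blockcol_def
  by (auto simp: mod_less_divisor[of n] intro!: index_zero_mat(1))

lemma pcol_mult_zero:
  assumes "Z \<in> carrier_mat n nc" "i < m*n" "j < nc" "odd (i div n)"
  shows "(pcol n m a k * Z) $$ (i,j) = 0"
proof -
  have "pcol n m a k $$ (i,t) = 0" if "t < n" for t
    using assms that by (auto simp: pcol_def blockcol_def)
  then show ?thesis using assms
    by (simp del: index_mult_mat(1) add: mult_entry[OF pcol_carrier assms(1)])
qed

lemma ez_Gev:
  assumes "0 < n"
  shows "ez n m (Gev n m a k l)"
proof (induction l arbitrary: k)
  case 0
  then show ?case by (simp add: ez_rcol)
next
  case (Suc l)
  let ?Y = "Gev n m a (k+2) l"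
  let ?X = "pcol n m a (k+1) * lastblk n m ?Y + Gam n m * ?Y"
  have Xc: "?X \<in> carrier_mat (m*n) n"
    using carrier_matD[OF Gev_carrier] by (intro carrier_matI) simp_all
  show ?case unfolding ez_def
  proof (intro allI impI)
    fix i j assume ij: "i < m*n" "j < n" "even (i div n)"
    show "Gev n m a k (Suc l) $$ (i,j) = 0"
    proof (cases "n \<le> i")
      case False
      then show ?thesis using ij assms by (simp del: index_mult_mat(1) add: Gam_mult_entry[OF assms Xc])
    next
      case True
      have i1: "i - n < m*n" using ij by simp
      have d1: "(i - n) div n = i div n - 1" using div_sub_n[OF assms True] by simp
      have "1 \<le> i div n" using div_le_mono[OF True, of n] assms by simp
      then have ge2: "i div n \<ge> 2" using ij(3) even_ge2 by blast
      have o: "odd ((i-n) div n)" using d1 ge2 ij(3) by (simp add: even_diff_nat)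
      have "2*n \<le> (i div n)*n" using ge2 by (simp add: mult_le_mono1)
      then have "2*n \<le> i" using div_mult_mod_eq[of i n] by linarith
      then have ge: "n \<le> i - n" by simp
      have d2: "(i - n - n) div n = i div n - 2" using div_sub_n[OF assms ge] d1 by simp
      have ev2: "even ((i-n-n) div n)" using d2 ij(3) ge2 by (simp add: even_diff_nat)
      have p0: "(pcol n m a (k+1) * lastblk n m ?Y) $$ (i-n,j) = 0"
        by (rule pcol_mult_zero[OF lastblk_carrier i1 ij(2) o])
      have "?Y $$ (i-n-n, j) = 0" using Suc[of "k+2", unfolded ez_def] ev2 i1 ij(2) by simp
      then have g0: "(Gam n m * ?Y) $$ (i-n,j) = 0"
        using Gam_mult_entry[OF assms Gev_carrier[of n m a "k+2" l] i1 ij(2)] ge by simp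
      have "?X $$ (i-n, j) = 0"
        using p0 g0 i1 ij(2) 
        by (simp del: index_mult_mat(1) add: add_entry[OF mult_carrier_mat[OF pcol_carrier lastblk_carrier] mult_carrier_mat[OF Gam_carrier Gev_carrier]])
      then show ?thesis using ij True by (simp del: index_mult_mat(1) add: Gam_mult_entry[OF assms Xc])
    qed
  qed
qed

lemma pl_carrier: "pcol n m a k * lastblk n m X \<in> carrier_mat (m*n) n"
  by (intro carrier_matI) simp_all
lemma GY_carrier: "Y \<in> carrier_mat (m*n) n \<Longrightarrow> Gam n m * Y \<in> carrier_mat (m*n) n"
  by (intro carrier_matI) auto

lemma lastidx: "1 \<le> m \<Longrightarrow> i < n \<Longrightarrow> (m-1)*n + i < m*(n::nat)"
  by (metis add.commute add_less_cancel_left le_add_diff_inverse mult_Suc plus_1_eq_Suc)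

lemma lastblk_Ghat:
  assumes "0 < n" "2 \<le> m" "even m"
  shows "lastblk n m (Ghat n m a k l) = 0\<^sub>m n n"
proof (rule eq_matI)
  fix i j assume "i < dim_row (0\<^sub>m n n :: 'a mat)" "j < dim_col (0\<^sub>m n n :: 'a mat)"
  then have ij: "i < n" "j < n" by auto
  let ?Y = "Gev n m a (k+1) l"
  have lt: "(m-1)*n + i < m*n" using lastidx[of m i n] ij assms by simp
  have "i div n = 0" using ij by simp
  then have dv: "((m-1)*n + i) div n = m - 1" using assms by simp
  have o: "odd (((m-1)*n + i) div n)" using dv assms by simp
  have "1*n \<le> (m-1)*n" by (rule mult_le_mono1) (use assms in simp)
  then have ge: "n \<le> (m-1)*n + i" by linarith
  have dv2: "((m-1)*n + i - n) div n = m - 2" using div_sub_n[OF assms(1) ge] dv by simp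
  have "(pcol n m a k * lastblk n m ?Y) $$ ((m-1)*n + i, j) = 0"
    by (rule pcol_mult_zero[OF lastblk_carrier lt ij(2) o])
  moreover have "(Gam n m * ?Y) $$ ((m-1)*n + i, j) = 0"
  proof -
    have l2: "(m-1)*n + i - n < m*n" using lt by simp
    have "even (((m-1)*n + i - n) div n)" using dv2 assms by simp
    then have "?Y $$ ((m-1)*n + i - n, j) = 0"
      using ez_Gev[OF assms(1), of m a "k+1" l, unfolded ez_def] l2 ij(2) by blast
    then show ?thesis
      using Gam_mult_entry[OF assms(1) Gev_carrier[of n m a "k+1" l] lt ij(2)] ge by simp
  qed
  ultimately have "Ghat n m a k l $$ ((m-1)*n + i, j) = 0"
    unfolding Ghat_def
    by (subst add_entry[OF pl_carrier GY_carrier[OF Gev_carrier] lt ij(2)]) simp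
  then show "lastblk n m (Ghat n m a k l) $$ (i, j) = 0\<^sub>m n n $$ (i, j)"
    using ij by (simp add: lastblk_def)
qed (auto simp: lastblk_def)


lemma more_dims[simp]: "dim_row (Gev n m a k l) = m*n" "dim_col (Gev n m a k l) = n"
  "dim_row (Ghat n m a k l) = m*n" "dim_col (Ghat n m a k l) = n"
  "dim_row (Fcol n m a k l) = m*n" "dim_col (Fcol n m a k l) = n"
  "dim_row (alpha n m a j i k) = n" "dim_col (alpha n m a j i k) = n"
  using carrier_matD[OF Gev_carrier[of n m a k l]] carrier_matD[OF Ghat_carrier[of n m a k l]]
    carrier_matD[OF Fcol_carrier[of n m a k l]] carrier_matD[OF alpha_carrier[of n m a j i k]]
  by simp_all

definition Hc :: "nat \<Rightarrow> nat \<Rightarrow> (int \<Rightarrow> nat \<Rightarrow> 'a::comm_ring_1 mat) \<Rightarrow> int \<Rightarrow> nat \<Rightarrow> 'a mat" where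
  "Hc n m a k j = (if even j then Gev n m a k (j div 2) else Ghat n m a k (j div 2))"

lemma Hc_carrier[simp]: "Hc n m a k j \<in> carrier_mat (m*n) n"
  by (simp add: Hc_def)

lemma Hc_dims[simp]: "dim_row (Hc n m a k j) = m*n" "dim_col (Hc n m a k j) = n"
  by (simp_all add: Hc_def)

lemma rearr:
  fixes A B C D R E :: "'a::comm_ring_1 mat"
  assumes "A \<in> carrier_mat nr nc" "B \<in> carrier_mat nr nc" "C \<in> carrier_mat nr nc"
    "D \<in> carrier_mat nr nc" "R \<in> carrier_mat nr nc" "E \<in> carrier_mat nr nc"
    and e: "R + E = B + D"
  shows "(A + B) + (C + D) = (R + (A + C)) + E"
proof (rule eq_matI)
  fix i j assume "i < dim_row (R + (A + C) + E)" "j < dim_col (R + (A + C) + E)"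
  then have ij: "i < nr" "j < nc" using assms by auto
  have "(R + E) $$ (i,j) = (B + D) $$ (i,j)" using e by simp
  then have e': "R $$ (i,j) + E $$ (i,j) = B $$ (i,j) + D $$ (i,j)"
    using add_entry[OF assms(5,6) ij] add_entry[OF assms(2,4) ij] by simp
  have "A $$ (i,j) + B $$ (i,j) + (C $$ (i,j) + D $$ (i,j)) = (A $$ (i,j) + C $$ (i,j)) + (B $$ (i,j) + D $$ (i,j))"
    by (simp add: algebra_simps)
  also have "\<dots> = (A $$ (i,j) + C $$ (i,j)) + (R $$ (i,j) + E $$ (i,j))" using e' by simp
  also have "\<dots> = R $$ (i,j) + (A $$ (i,j) + C $$ (i,j)) + E $$ (i,j)" by (simp add: algebra_simps)
  finally show "(A + B + (C + D)) $$ (i, j) = (R + (A + C) + E) $$ (i, j)" using assms ij by simp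
qed (use assms in auto)

lemma key:
  assumes "0 < n" "2 \<le> m" "even m"
  shows "rcol n m a k * alpha n m a (Suc j) 0 k + Hc n m a k (Suc j)
     = Gam n m * Hc n m a (k+1) j + (pcol n m a k + rcol n m a k) * lastblk n m (Hc n m a (k+1) j)"
proof (cases "even j")
  case True
  let ?Y = "Gev n m a (k+1) (j div 2)"
  have H1: "Hc n m a (k+1) j = ?Y" using True by (simp add: Hc_def)
  have H2: "Hc n m a k (Suc j) = Ghat n m a k (j div 2)" using True by (simp add: Hc_def)
  have al: "alpha n m a (Suc j) 0 k = lastblk n m ?Y" using True by simp
  have d: "(pcol n m a k + rcol n m a k) * lastblk n m ?Y = pcol n m a k * lastblk n m ?Y + rcol n m a k * lastblk n m ?Y"
    by (rule add_mult_distrib_mat) auto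
  have c1: "rcol n m a k * lastblk n m ?Y \<in> carrier_mat (m*n) n" by (intro carrier_matI) simp_all
  show ?thesis unfolding H1 H2 al d Ghat_def
    using pl_carrier GY_carrier[OF Gev_carrier] c1
    by (intro eq_matI) (auto simp: ac_simps)
next
  case False
  let ?Y = "Ghat n m a (k+1) (j div 2)"
  have H1: "Hc n m a (k+1) j = ?Y" using False by (simp add: Hc_def)
  have H2: "Hc n m a k (Suc j) = Gam n m * ?Y" using False
    by (simp add: Hc_def Gev_Suc_Ghat[symmetric])
  have al: "alpha n m a (Suc j) 0 k = 0\<^sub>m n n" using False by simp
  show ?thesis unfolding H1 H2 al lastblk_Ghat[OF assms]
    using GY_carrier[OF Ghat_carrier] by (intro eq_matI) auto
qed


lemma main:
  fixes a :: "int \<Rightarrow> nat \<Rightarrow> 'a::comm_ring_1 mat"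
  assumes "0 < n" "2 \<le> m" "even m" "\<And>k i. i < m \<Longrightarrow> a k i \<in> carrier_mat n n"
  shows "Fcol n m a k j = msum (m*n) n (\<lambda>i. Fcol n m a k i * alpha n m a j i k) {..<j} + Hc n m a k j"
proof (induction j arbitrary: k)
  case 0
  have "Fcol n m a k 0 = rcol n m a k" by (simp add: Fcol_def)
  then show ?case by (intro eq_matI) (auto simp: Hc_def msum_index)
next
  case (Suc j)
  define F' where "F' i = Fcol n m a (k+1) i" for i
  define al where "al i = alpha n m a j i (k+1)" for i
  define S where "S = msum (m*n) n (\<lambda>i. F' i * al i) {..<j}"
  define H' where "H' = Hc n m a (k+1) j"
  define c :: "'a mat" where "c = pcol n m a k + rcol n m a k"
  define G :: "'a mat" where "G = Gam n m"
  have m1: "1 \<le> m" using assms by simp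
  have ccar: "c \<in> carrier_mat (m*n) n" unfolding c_def by (intro carrier_matI) simp_all
  have Gcar: "G \<in> carrier_mat (m*n) (m*n)" unfolding G_def by simp
  have F'car: "F' i \<in> carrier_mat (m*n) n" for i unfolding F'_def by simp
  have alcar: "al i \<in> carrier_mat n n" for i unfolding al_def by simp
  have Fal: "F' i * al i \<in> carrier_mat (m*n) n" for i using F'car alcar by (intro carrier_matI) auto
  have Scar: "S \<in> carrier_mat (m*n) n" unfolding S_def by simp
  have H'car: "H' \<in> carrier_mat (m*n) n" unfolding H'_def by simp
  have IH: "F' j = S + H'" using Suc.IH[of "k+1"] unfolding F'_def S_def H'_def al_def by simp
  have FS: "Fcol n m a k (Suc i) = G * F' i + c * lastblk n m (F' i)" for i
    unfolding G_def c_def F'_def by (rule Fcol_Suc[OF assms(1) m1 assms(4)])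
  have step: "Fcol n m a k (Suc i) * al i = G * (F' i * al i) + c * lastblk n m (F' i * al i)" for i
  proof -
    have "Fcol n m a k (Suc i) * al i = (G * F' i) * al i + (c * lastblk n m (F' i)) * al i"
      unfolding FS by (rule add_mult_distrib_mat[OF mult_carrier_mat[OF Gcar F'car] mult_carrier_mat[OF ccar lastblk_carrier] alcar])
    also have "(G * F' i) * al i = G * (F' i * al i)"
      using Gcar F'car alcar by (rule assoc_mult_mat)
    also have "(c * lastblk n m (F' i)) * al i = c * (lastblk n m (F' i) * al i)"
      using ccar alcar by (intro assoc_mult_mat) auto
    also have "lastblk n m (F' i) * al i = lastblk n m (F' i * al i)"
      using lastblk_mult[OF m1 F'car alcar] by simp
    finally show ?thesis .
  qed
  have sum1: "msum (m*n) n (\<lambda>i. Fcol n m a k i * alpha n m a (Suc j) i k) {..<Suc j}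
      = rcol n m a k * alpha n m a (Suc j) 0 k + msum (m*n) n (\<lambda>i. Fcol n m a k (Suc i) * al i) {..<j}"
    by (subst msum_Suc) (auto simp: al_def Fcol_def intro!: carrier_matI)
  have sum2: "msum (m*n) n (\<lambda>i. Fcol n m a k (Suc i) * al i) {..<j} = G * S + c * lastblk n m S"
  proof -
    have "msum (m*n) n (\<lambda>i. Fcol n m a k (Suc i) * al i) {..<j}
        = msum (m*n) n (\<lambda>i. G * (F' i * al i) + c * lastblk n m (F' i * al i)) {..<j}"
      using step by (intro msum_cong) auto
    also have "\<dots> = msum (m*n) n (\<lambda>i. G * (F' i * al i)) {..<j} + msum (m*n) n (\<lambda>i. c * lastblk n m (F' i * al i)) {..<j}"
      using Gcar ccar Fal by (intro msum_add) (auto intro!: carrier_matI)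
    also have "msum (m*n) n (\<lambda>i. G * (F' i * al i)) {..<j} = G * S"
      unfolding S_def using Gcar Fal by (rule msum_mult_left)
    also have "msum (m*n) n (\<lambda>i. c * lastblk n m (F' i * al i)) {..<j} = c * msum n n (\<lambda>i. lastblk n m (F' i * al i)) {..<j}"
      using ccar by (rule msum_mult_left) simp
    also have "msum n n (\<lambda>i. lastblk n m (F' i * al i)) {..<j} = lastblk n m S"
      unfolding S_def by (rule lastblk_msum[OF m1, symmetric])
    finally show ?thesis .
  qed
  have FSj: "Fcol n m a k (Suc j) = (G*S + G*H') + (c * lastblk n m S + c * lastblk n m H')"
  proof -
    have "Fcol n m a k (Suc j) = G * (S + H') + c * (lastblk n m S + lastblk n m H')"
      unfolding FS IH lastblk_add[OF m1 Scar H'car] ..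
    also have "G * (S + H') = G*S + G*H'" using Gcar Scar H'car by (rule mult_add_distrib_mat)
    also have "c * (lastblk n m S + lastblk n m H') = c * lastblk n m S + c * lastblk n m H'"
      using ccar by (intro mult_add_distrib_mat) auto
    finally show ?thesis .
  qed
  have K: "rcol n m a k * alpha n m a (Suc j) 0 k + Hc n m a k (Suc j) = G*H' + c * lastblk n m H'"
    unfolding G_def c_def H'_def by (rule key[OF assms(1-3)])
  show ?case unfolding sum1 sum2 FSj
    by (rule rearr[OF _ _ _ _ _ _ K]) (use Gcar Scar H'car ccar Hc_carrier in \<open>auto intro!: carrier_matI\<close>)
qed


lemma msum_reindex0:
  assumes "inj_on g R" "g ` R \<subseteq> I" "finite I" "\<And>i. i \<in> I \<Longrightarrow> i \<notin> g ` R \<Longrightarrow> f i = 0\<^sub>m nr nc"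
  shows "msum nr nc f I = msum nr nc (\<lambda>r. f (g r)) R"
proof (rule eq_matI)
  fix i j assume "i < dim_row (msum nr nc (\<lambda>r. f (g r)) R)" "j < dim_col (msum nr nc (\<lambda>r. f (g r)) R)"
  then have ij: "i < nr" "j < nc" by auto
  have "(\<Sum>x\<in>I. f x $$ (i,j)) = (\<Sum>x\<in>g ` R. f x $$ (i,j))"
    using assms ij by (intro sum.mono_neutral_right) auto
  also have "\<dots> = (\<Sum>r\<in>R. f (g r) $$ (i,j))" using assms(1) by (rule sum.reindex_cong) auto
  finally show "msum nr nc f I $$ (i, j) = msum nr nc (\<lambda>r. f (g r)) R $$ (i, j)"
    using ij by (simp add: msum_index)
qed auto

theorem mainTheorem2:
  fixes n s N :: nat and a :: "int \<Rightarrow> nat \<Rightarrow> 'a::comm_ring_1 mat"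
  assumes "n \<ge> 1" and "s \<ge> 2" and "N \<ge> 1"
    and "\<And>k i. i < 2*s \<Longrightarrow> a k i \<in> carrier_mat n n"
    and "\<And>k i. a (k + int N) i = a k i"
  shows "\<forall>k l.
    Fcol n (2*s) a k (2*l) =
      msum (2*s*n) n (\<lambda>r. Fcol n (2*s) a k (2*r-1) * alpha n (2*s) a (2*l) (2*r-1) k) {1..l}
      + Gev n (2*s) a k l
  \<and> Fcol n (2*s) a k (2*l+1) =
      msum (2*s*n) n (\<lambda>r. Fcol n (2*s) a k (2*r) * alpha n (2*s) a (2*l+1) (2*r) k) {0..l}
      + Ghat n (2*s) a k l"
proof (intro allI conjI)
  fix k :: int and l :: nat
  have n0: "0 < n" using assms(1) by simp
  have m2: "2 \<le> 2*s" using assms(2) by simp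
  have me: "even (2*s)" by simp
  note M = main[OF n0 m2 me assms(4)]
  have z: "Fcol n (2*s) a k i * alpha n (2*s) a j i k = 0\<^sub>m (2*s*n) n" if "\<not> (i < j \<and> odd (j - i))" for i j
    using alpha_zero[OF that, of n "2*s" a k] by (simp add: right_mult_zero_mat[OF Fcol_carrier])
  have "msum (2*s*n) n (\<lambda>i. Fcol n (2*s) a k i * alpha n (2*s) a (2*l) i k) {..<2*l}
      = msum (2*s*n) n (\<lambda>r. Fcol n (2*s) a k (2*r-1) * alpha n (2*s) a (2*l) (2*r-1) k) {1..l}"
  proof (rule msum_reindex0)
    show "inj_on (\<lambda>r. 2*r-1) {1..l}" by (auto simp: inj_on_def)
    show "(\<lambda>r. 2*r-1) ` {1..l} \<subseteq> {..<2*l}" by auto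
    fix i assume i: "i \<in> {..<2*l}" "i \<notin> (\<lambda>r. 2*r-1) ` {1..l}"
    have "\<not> odd i"
    proof
      assume "odd i"
      then have "i = 2*((i+1) div 2) - 1" "(i+1) div 2 \<in> {1..l}" using i(1) by auto
      then show False using i(2) by blast
    qed
    then show "Fcol n (2*s) a k i * alpha n (2*s) a (2*l) i k = 0\<^sub>m (2*s*n) n"
      by (intro z) auto
  qed auto
  then show "Fcol n (2*s) a k (2*l) =
      msum (2*s*n) n (\<lambda>r. Fcol n (2*s) a k (2*r-1) * alpha n (2*s) a (2*l) (2*r-1) k) {1..l}
      + Gev n (2*s) a k l"
    using M[where k=k and j="2*l"] by (simp add: Hc_def)
  have "msum (2*s*n) n (\<lambda>i. Fcol n (2*s) a k i * alpha n (2*s) a (2*l+1) i k) {..<2*l+1}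
      = msum (2*s*n) n (\<lambda>r. Fcol n (2*s) a k (2*r) * alpha n (2*s) a (2*l+1) (2*r) k) {0..l}"
  proof (rule msum_reindex0)
    show "inj_on (\<lambda>r. 2*r) {0..l}" by (auto simp: inj_on_def)
    show "(\<lambda>r. 2*r) ` {0..l} \<subseteq> {..<2*l+1}" by auto
    fix i assume i: "i \<in> {..<2*l+1}" "i \<notin> (\<lambda>r. 2*r) ` {0..l}"
    have "\<not> even i"
    proof
      assume "even i"
      then have "i = 2*(i div 2)" "i div 2 \<in> {0..l}" using i(1) by auto
      then show False using i(2) by blast
    qed
    then show "Fcol n (2*s) a k i * alpha n (2*s) a (2*l+1) i k = 0\<^sub>m (2*s*n) n"
      by (intro z) auto
  qed auto
  then show "Fcol n (2*s) a k (2*l+1) =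
      msum (2*s*n) n (\<lambda>r. Fcol n (2*s) a k (2*r) * alpha n (2*s) a (2*l+1) (2*r) k) {0..l}
      + Ghat n (2*s) a k l"
    using M[where k=k and j="2*l+1"] by (simp add: Hc_def)
qed

end
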